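(* Let $K=3$ and let $l\ge m\ge 2$ be integers. Then \[ h(l,\,m,\,0)\ \le\ h(l-1,\,m-1,\,2). \]
   Context: For a vector $\vec n=(n_1,n_2,n_3)$ of nonnegative integers, the following random process is run: stocks start at $\vec n^{(0)}=\vec n$; at each step $t=1,2,\dots$, as long as at least two coordinates of $\vec n^{(t-1)}$ are nonzero, an index $i$ is chosen uniformly at random (independently of the past) among the indices with $n_i^{(t-1)}>0$, and $\vec n^{(t)}=\vec n^{(t-1)}-\vec e_i$ ($\vec e_i$ the $i$-th standard unit vector). The process stops at the first time $T$ at which at most one coordinate is nonzero, and $h(\vec n)=\mathbb{E}[T]$. Equivalently, with $\operatorname{support}(\vec n)=\{i:n_i\ne 0\}$: $h(\vec n)=0$ if $|\operatorname{support}(\vec n)|\le1$, and otherwise $h(\vec n)=1+\frac{1}{|\operatorname{support}(\vec n)|}\sum_{i\in\operatorname{support}(\vec n)}h(\vec n-\vec e_i)$. *)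

theory Defs
  imports Complex_Main
begin

text \<open>Expected stopping time h for K = 3 stocks, vector (n1, n2, n3).\<close>

definition supp3 :: "nat \<Rightarrow> nat \<Rightarrow> nat \<Rightarrow> nat set" where
  "supp3 n1 n2 n3 = {i \<in> {1, 2, 3}. (if i = 1 then n1 else if i = 2 then n2 else n3) \<noteq> 0}"

function h :: "nat \<Rightarrow> nat \<Rightarrow> nat \<Rightarrow> real" where
  "h n1 n2 n3 =
     (if card (supp3 n1 n2 n3) \<le> 1 then 0
      else 1 + (1 / real (card (supp3 n1 n2 n3))) *
        ((if n1 \<noteq> 0 then h (n1 - 1) n2 n3 else 0)
       + (if n2 \<noteq> 0 then h n1 (n2 - 1) n3 else 0)
       + (if n3 \<noteq> 0 then h n1 n2 (n3 - 1) else 0)))"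
  by pat_completeness auto
termination
  by (relation "measure (\<lambda>(a, b, c). a + b + c)") auto

end

theory Submission
  imports Defs
begin

declare h.simps [simp del]

lemma card_supp3: "card (supp3 a b c) = of_bool (a \<noteq> 0) + of_bool (b \<noteq> 0) + of_bool (c \<noteq> 0)"
proof -
  have "supp3 a b c = (if a \<noteq> 0 then {1} else {}) \<union> (if b \<noteq> 0 then {2} else {}) \<union> (if c \<noteq> 0 then {3} else {})"
    by (auto simp: supp3_def split: if_splits)
  then show ?thesis by (auto simp: card_insert_if)
qed

lemma h_eq: "h a b c =
     (if of_bool (a \<noteq> 0) + of_bool (b \<noteq> 0) + of_bool (c \<noteq> 0) \<le> (1::nat) then 0
      else 1 + (1 / real (of_bool (a \<noteq> 0) + of_bool (b \<noteq> 0) + of_bool (c \<noteq> 0))) *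
        ((if a \<noteq> 0 then h (a - 1) b c else 0)
       + (if b \<noteq> 0 then h a (b - 1) c else 0)
       + (if c \<noteq> 0 then h a b (c - 1) else 0)))"
  by (subst h.simps) (simp only: card_supp3)

lemma h_nonneg: "h a b c \<ge> 0"
proof (induction a b c rule: h.induct)
  case (1 a b c)
  show ?case
    by (subst h_eq) (use 1 in \<open>auto simp: card_supp3 intro!: add_nonneg_nonneg mult_nonneg_nonneg\<close>)
qed

lemma h_0: "h a 0 0 = 0" "h 0 b 0 = 0" "h 0 0 c = 0"
  by (subst h_eq, simp)+

lemma h_2: "h (Suc a) (Suc b) 0 = 1 + (h a (Suc b) 0 + h (Suc a) b 0) / 2"
  by (subst h_eq) simp

lemma h_2b: "h (Suc a) 0 (Suc c) = 1 + (h a 0 (Suc c) + h (Suc a) 0 c) / 2"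
  by (subst h_eq) simp

lemma h_2c: "h 0 (Suc b) (Suc c) = 1 + (h 0 b (Suc c) + h 0 (Suc b) c) / 2"
  by (subst h_eq) simp

lemma h_3: "h (Suc a) (Suc b) (Suc c) = 1 + (h a (Suc b) (Suc c) + h (Suc a) b (Suc c) + h (Suc a) (Suc b) c) / 3"
  by (subst h_eq) simp

lemmas h_rec = h_0 h_2 h_2b h_2c h_3

lemma h_swap: "h a b c = h b a c \<and> h a b c = h a c b"
proof (induction "a+b+c" arbitrary: a b c rule: less_induct)
  case less
  show ?case
  proof (cases a)
    case 0
    then show ?thesis
    proof (cases b)
      case 0
      then show ?thesis using \<open>a = 0\<close> by (cases c) (simp_all add: h_rec)
    next
      case (Suc b')
      then show ?thesis using \<open>a = 0\<close>
      proof (cases c)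
        case 0 then show ?thesis using \<open>a = 0\<close> Suc by (simp add: h_rec)
      next
        case (Suc c')
        then show ?thesis using \<open>a = 0\<close> \<open>b = Suc b'\<close>
          using less[of 0 b' "Suc c'"] less[of 0 "Suc b'" c']
          by (simp add: h_rec)
      qed
    qed
  next
    case (Suc a')
    then show ?thesis
    proof (cases b)
      case 0
      then show ?thesis using \<open>a = Suc a'\<close>
      proof (cases c)
        case 0 then show ?thesis using \<open>a = Suc a'\<close> \<open>b = 0\<close> by (simp add: h_rec)
      next
        case (Suc c')
        then show ?thesis using \<open>a = Suc a'\<close> \<open>b = 0\<close>
          using less[of a' 0 "Suc c'"] less[of "Suc a'" 0 c']
          by (simp add: h_rec)
      qed
    next
      case (Suc b')
      then show ?thesis using \<open>a = Suc a'\<close>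
      proof (cases c)
        case 0 then show ?thesis using \<open>a = Suc a'\<close> \<open>b = Suc b'\<close>
          using less[of a' "Suc b'" 0] less[of "Suc a'" b' 0]
          by (simp add: h_rec)
      next
        case (Suc c')
        then show ?thesis using \<open>a = Suc a'\<close> \<open>b = Suc b'\<close>
          using less[of a' "Suc b'" "Suc c'"] less[of "Suc a'" b' "Suc c'"] less[of "Suc a'" "Suc b'" c']
          by (simp add: h_rec)
      qed
    qed
  qed
qed

lemma h_s12: "h a b c = h b a c" and h_s23: "h a b c = h a c b"
  using h_swap by blast+

lemma L0: "h (Suc (Suc k)) (Suc 0) 0 \<le> h (Suc k) (Suc (Suc 0)) 0"
proof (induction k)
  case 0
  show ?case using h_s12[of 2 1 0] by (simp add: numeral_2_eq_2)
next
  case (Suc k)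
  have e1: "h (Suc (Suc (Suc k))) (Suc 0) 0 = 1 + h (Suc (Suc k)) (Suc 0) 0 / 2"
    by (simp add: h_rec)
  have e2: "h (Suc (Suc k)) (Suc (Suc 0)) 0 = 1 + (h (Suc k) (Suc (Suc 0)) 0 + h (Suc (Suc k)) (Suc 0) 0) / 2"
    by (simp add: h_rec)
  have "h (Suc (Suc k)) (Suc 0) 0 / 2 \<le> (h (Suc k) (Suc (Suc 0)) 0 + h (Suc (Suc k)) (Suc 0) 0) / 2"
    using Suc h_nonneg[of "Suc (Suc k)" "Suc 0" 0] by (simp add: divide_right_mono)
  then show ?case unfolding e1 e2 by simp
qed

lemma L1: "h (Suc l) (Suc m) 0 \<le> 2 + h l m 0"
proof (induction "l+m" arbitrary: l m rule: less_induct)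
  case less
  show ?case
  proof (cases l)
    case 0
    then show ?thesis
    proof (cases m)
      case 0 then show ?thesis using \<open>l = 0\<close> by (simp add: h_rec)
    next
      case (Suc m')
      have "h (Suc 0) (Suc m') 0 \<le> 2 + h 0 m' 0" using less[of 0 m'] Suc \<open>l = 0\<close> by simp
      then show ?thesis using Suc \<open>l = 0\<close> by (simp add: h_rec)
    qed
  next
    case (Suc l')
    then show ?thesis
    proof (cases m)
      case 0
      have "h (Suc l') (Suc 0) 0 \<le> 2 + h l' 0 0" using less[of l' 0] Suc 0 by simp
      then show ?thesis using Suc 0 by (simp add: h_rec)
    next
      case (Suc m')
      have "h l (Suc m) 0 \<le> 2 + h l' m 0" using less[of l' m] Suc \<open>l = Suc l'\<close> by simp
      moreover have "h (Suc l) m 0 \<le> 2 + h l m' 0" using less[of l m'] Suc \<open>l = Suc l'\<close> by simp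
      moreover have "h (Suc l) (Suc m) 0 = 1 + (h l (Suc m) 0 + h (Suc l) m 0) / 2"
        by (rule h_2)
      moreover have "h l m 0 = 1 + (h l' m 0 + h l m' 0) / 2"
        using Suc \<open>l = Suc l'\<close> by (simp only: h_2)
      ultimately show ?thesis by (simp only: add_divide_distrib; linarith)
    qed
  qed
qed

lemma L2: "h (Suc l) (Suc m) 0 \<le> 1 + h l m (Suc 0)"
proof (induction "l+m" arbitrary: l m rule: less_induct)
  case less
  show ?case
  proof (cases l)
    case 0
    then show ?thesis
    proof (cases m)
      case 0 then show ?thesis using \<open>l = 0\<close> by (simp add: h_rec)
    next
      case (Suc m')
      have "h 0 (Suc m') (Suc 0) = h (Suc 0) (Suc m') 0"
        using h_s12[of 0 "Suc m'" "Suc 0"] h_s23[of "Suc m'" 0 "Suc 0"] h_s12[of "Suc m'" "Suc 0" 0] by simp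
      then show ?thesis using Suc \<open>l = 0\<close> h_nonneg[of "Suc 0" "Suc m'" 0] by (simp add: h_rec)
    qed
  next
    case (Suc l')
    then show ?thesis
    proof (cases m)
      case 0
      have "h (Suc l') 0 (Suc 0) = h (Suc l') (Suc 0) 0"
        using h_s23[of "Suc l'" 0 "Suc 0"] by simp
      then show ?thesis using Suc 0 h_nonneg[of "Suc l'" "Suc 0" 0] by (simp add: h_rec)
    next
      case (Suc m')
      have X: "h l (Suc m) 0 \<le> 1 + h l' m (Suc 0)" using less[of l' m] Suc \<open>l = Suc l'\<close> by simp
      have Y: "h (Suc l) m 0 \<le> 1 + h l m' (Suc 0)" using less[of l m'] Suc \<open>l = Suc l'\<close> by simp
      have Z: "h (Suc l) (Suc m) 0 \<le> 2 + h l m 0" by (rule L1)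
      have e1: "h (Suc l) (Suc m) 0 = 1 + (h l (Suc m) 0 + h (Suc l) m 0) / 2"
        by (simp add: h_rec)
      have e2: "h l m (Suc 0) = 1 + (h l' m (Suc 0) + h l m' (Suc 0) + h l m 0) / 3"
        using Suc \<open>l = Suc l'\<close> by (simp add: h_rec)
      show ?thesis using X Y Z unfolding e2 using e1 by (simp only: add_divide_distrib; linarith)
    qed
  qed
qed

lemma L3: "h (Suc (Suc l)) (Suc (Suc m)) 0 \<le> h (Suc l) (Suc m) 2"
proof (induction "l+m" arbitrary: l m rule: less_induct)
  case less
  have X: "h (Suc l) (Suc (Suc m)) 0 \<le> h l (Suc m) 2"
  proof (cases l)
    case 0
    have "h (Suc 0) (Suc (Suc m)) 0 = h (Suc (Suc m)) (Suc 0) 0" by (rule h_s12)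
    also have "\<dots> \<le> h (Suc m) (Suc (Suc 0)) 0" by (rule L0)
    also have "\<dots> = h 0 (Suc m) 2"
      using h_s12[of 0 "Suc m" 2] h_s23[of "Suc m" 0 2] by (simp add: numeral_2_eq_2)
    finally show ?thesis using 0 by simp
  next
    case (Suc l')
    then show ?thesis using less[of l' m] by simp
  qed
  have Y: "h (Suc (Suc l)) (Suc m) 0 \<le> h (Suc l) m 2"
  proof (cases m)
    case 0
    have "h (Suc (Suc l)) (Suc 0) 0 \<le> h (Suc l) (Suc (Suc 0)) 0" by (rule L0)
    also have "\<dots> = h (Suc l) 0 2"
      using h_s23[of "Suc l" 0 2] by (simp add: numeral_2_eq_2)
    finally show ?thesis using 0 by simp
  next
    case (Suc m')
    then show ?thesis using less[of l m'] by simp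
  qed
  have Z: "h (Suc (Suc l)) (Suc (Suc m)) 0 \<le> 1 + h (Suc l) (Suc m) (Suc 0)" by (rule L2)
  have e1: "h (Suc (Suc l)) (Suc (Suc m)) 0 = 1 + (h (Suc l) (Suc (Suc m)) 0 + h (Suc (Suc l)) (Suc m) 0) / 2"
    by (simp add: h_rec)
  have e2: "h (Suc l) (Suc m) 2 = 1 + (h l (Suc m) 2 + h (Suc l) m 2 + h (Suc l) (Suc m) (Suc 0)) / 3"
    using h_3[of l m 1] by (simp add: numeral_2_eq_2)
  show ?case using X Y Z unfolding e2 using e1 by (simp only: add_divide_distrib; linarith)
qed

theorem lemma6:
  fixes l m :: nat
  assumes "l \<ge> m" and "m \<ge> 2"
  shows "h l m 0 \<le> h (l - 1) (m - 1) 2"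
proof -
  obtain L where L: "l = Suc (Suc L)" using assms by (metis add_2_eq_Suc le_Suc_ex order.trans)
  obtain M where M: "m = Suc (Suc M)" using assms by (metis add_2_eq_Suc le_Suc_ex)
  show ?thesis using L3[of L M] L M by simp
qed

end
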